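(* Let the setting be as in the context and suppose that $F_c$ satisfies $\lim_{n\to\infty} n\,\bar F_c(\tau_{F_c}-\xi/\sqrt n)=\infty$ for every $\xi>0$. Then $\tau_H=\tau_{F_c}<\infty$ and $\sqrt n\,(\tau_H-t_{(n)})\to 0$ in probability as $n\to\infty$, where $t_{(n)}=\max_{1\le i\le n}Y_i$.
   Context: $T\in[0,\infty]$ and $C\ge0$ are independent; $T$ has improper distribution function $F(t)=\mathbb P(T\le t)=pF_0(t)$ with $0<p<1$ and $F_0$ a proper distribution function, and $C$ has distribution function $F_c$. $Y=\min(T,C)$ has distribution function $H$ with $1-H=(1-F)(1-F_c)$. For a distribution function $G$, $\bar G=1-G$ and $\tau_G=\sup\{t\ge0:G(t)<1\}$. $Y_1,\dots,Y_n$ are i.i.d. copies of $Y$. *)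

theory Defs
  imports "HOL-Probability.Probability"
begin

text \<open>Right endpoint of a distribution function G on [0,\<infinity>):
  tau_G = sup {t \<ge> 0 : G t < 1}, with the convention sup of the empty set = 0
  (all distributions here live on [0,\<infinity>]).\<close>
definition tau :: "(real \<Rightarrow> real) \<Rightarrow> ereal" where
  "tau G = Sup ({0} \<union> {ereal t | t. t \<ge> 0 \<and> G t < 1})"

definition survival :: "(real \<Rightarrow> real) \<Rightarrow> ereal \<Rightarrow> real" where
  "survival G x = (case x of ereal r \<Rightarrow> 1 - G r | PInfty \<Rightarrow> 0 | MInfty \<Rightarrow> 1)"

definition proper_dist_fun :: "(real \<Rightarrow> real) \<Rightarrow> bool" where
  "proper_dist_fun G \<longleftrightarrow> mono G \<and> (\<forall>t. continuous (at_right t) G)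
     \<and> (G \<longlongrightarrow> 0) at_bot \<and> (G \<longlongrightarrow> 1) at_top"

end

theory Submission
  imports Defs
begin

lemma real_ereal_gt_iff:
  fixes m :: ereal
  assumes "m \<noteq> \<infinity>" "m \<noteq> -\<infinity>"
  shows "(real_of_ereal m > s) \<longleftrightarrow> (m > ereal s)"
  using assms by (cases m) auto

lemma one_minus_pow_le_exp:
  fixes x :: real and n :: nat
  assumes "0 \<le> x" "x \<le> 1"
  shows "(1 - x) ^ n \<le> exp (- (real n * x))"
proof -
  have "(1 - x) ^ n \<le> exp (-x) ^ n"
    using assms by (intro power_mono) (auto, metis exp_ge_add_one_self uminus_add_conv_diff add.commute)
  also have "\<dots> = exp (- (real n * x))"
    by (simp add: exp_of_nat_mult[symmetric])
  finally show ?thesis .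
qed

theorem mainTheorem2:
  fixes M :: "'a measure"
    and T :: "'a \<Rightarrow> ereal" and C :: "'a \<Rightarrow> real"
    and p :: real and F0 :: "real \<Rightarrow> real"
    and Ys :: "nat \<Rightarrow> 'a \<Rightarrow> real"
  assumes "prob_space M"
    and T_rv: "T \<in> borel_measurable M" and C_rv: "C \<in> borel_measurable M"
    and T_nonneg: "\<forall>\<omega>\<in>space M. T \<omega> \<ge> 0"
    and C_nonneg: "\<forall>\<omega>\<in>space M. C \<omega> \<ge> 0"
    and indep_TC: "prob_space.indep_var M borel T borel (\<lambda>\<omega>. ereal (C \<omega>))"
    and p: "0 < p" "p < 1"
    and F0: "proper_dist_fun F0"
    and F: "\<forall>t. measure M {\<omega>\<in>space M. T \<omega> \<le> ereal t} = p * F0 t"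
    and Ys_rv: "\<forall>i. Ys i \<in> borel_measurable M"
    and Ys_indep: "prob_space.indep_vars M (\<lambda>_. borel) Ys UNIV"
    and Ys_dist: "\<forall>i. distr M borel (Ys i)
                      = distr M borel (\<lambda>\<omega>. real_of_ereal (min (T \<omega>) (ereal (C \<omega>))))"
    and cond: "\<forall>\<xi>>0. ((\<lambda>n. ereal (real n * survival (cdf (distr M borel C))
                         (tau (cdf (distr M borel C)) - ereal (\<xi> / sqrt (real n)))))
                       \<longlongrightarrow> \<infinity>) sequentially"
  shows "tau (cdf (distr M borel (\<lambda>\<omega>. real_of_ereal (min (T \<omega>) (ereal (C \<omega>))))))
           = tau (cdf (distr M borel C))
       \<and> tau (cdf (distr M borel C)) < \<infinity>
       \<and> (\<forall>\<epsilon>>0. ((\<lambda>n. measure M {\<omega>\<in>space M.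
              \<bar>sqrt (real n) * (real_of_ereal (tau (cdf (distr M borel
                   (\<lambda>\<omega>. real_of_ereal (min (T \<omega>) (ereal (C \<omega>)))))))
                 - Max ((\<lambda>i. Ys i \<omega>) ` {0..<n}))\<bar> > \<epsilon>}) \<longlongrightarrow> 0) sequentially)"
proof -
  interpret prob_space M by fact
  define Y where "Y = (\<lambda>\<omega>. real_of_ereal (min (T \<omega>) (ereal (C \<omega>))))"
  define Fc where "Fc = cdf (distr M borel C)"
  define H where "H = cdf (distr M borel Y)"
  have Y_rv: "Y \<in> borel_measurable M"
    unfolding Y_def using T_rv C_rv by measurable
  have Fc_eq: "Fc x = prob (C -` {..x} \<inter> space M)" for x
    unfolding Fc_def cdf_def using C_rv by (simp add: measure_distr)
  have H_eq: "H x = prob (Y -` {..x} \<inter> space M)" for x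
    unfolding H_def cdf_def using Y_rv by (simp add: measure_distr)
  have dist_eq: "prob (Ys i -` A \<inter> space M) = prob (Y -` A \<inter> space M)" if "A \<in> sets borel" for i A
  proof -
    have "measure (distr M borel (Ys i)) A = measure (distr M borel Y) A"
      using Ys_dist unfolding Y_def by simp
    thus ?thesis using that Ys_rv Y_rv by (simp add: measure_distr)
  qed
  have F0le: "F0 t \<le> 1" for t
  proof -
    have "mono F0" "(F0 \<longlongrightarrow> 1) at_top" using F0 unfolding proper_dist_fun_def by auto
    moreover have "eventually (\<lambda>s. F0 t \<le> F0 s) at_top"
      using \<open>mono F0\<close> by (auto simp: eventually_at_top_linorder mono_def intro!: exI[of _ t])
    ultimately show ?thesis
      by (intro tendsto_lowerbound[of F0 1 at_top]) auto
  qed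
  have PT: "prob {\<omega>\<in>space M. T \<omega> > ereal t} \<ge> 1 - p" for t
  proof -
    have ev: "{\<omega>\<in>space M. T \<omega> \<le> ereal t} \<in> events" using T_rv by measurable
    have "{\<omega>\<in>space M. T \<omega> > ereal t} = space M - {\<omega>\<in>space M. T \<omega> \<le> ereal t}" by auto
    hence "prob {\<omega>\<in>space M. T \<omega> > ereal t} = 1 - p * F0 t"
      using prob_compl[OF ev] F by simp
    moreover have "p * F0 t \<le> p" using F0le[of t] p by (simp add: mult_left_le)
    ultimately show ?thesis by simp
  qed
  have Ygt: "Y \<omega> > s \<longleftrightarrow> T \<omega> > ereal s \<and> ereal (C \<omega>) > ereal s" if "\<omega> \<in> space M" for \<omega> s
  proof -
    have "min (T \<omega>) (ereal (C \<omega>)) \<noteq> \<infinity>" by (auto simp: min_def)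
    moreover have "min (T \<omega>) (ereal (C \<omega>)) \<noteq> -\<infinity>"
      using T_nonneg that by (auto simp: min_def)
    ultimately show ?thesis unfolding Y_def by (simp add: real_ereal_gt_iff)
  qed
  have PYgt: "prob (Y -` {s<..} \<inter> space M) = prob {\<omega>\<in>space M. T \<omega> > ereal s} * (1 - Fc s)" for s
  proof -
    have "prob ((\<lambda>x. (T x, ereal (C x))) -` ({ereal s<..} \<times> {ereal s<..}) \<inter> space M) =
      prob (T -` {ereal s<..} \<inter> space M) * prob ((\<lambda>x. ereal (C x)) -` {ereal s<..} \<inter> space M)"
      by (rule indep_varD[OF indep_TC]) auto
    moreover have "(\<lambda>x. (T x, ereal (C x))) -` ({ereal s<..} \<times> {ereal s<..}) \<inter> space M = Y -` {s<..} \<inter> space M"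
      using Ygt by auto
    moreover have "T -` {ereal s<..} \<inter> space M = {\<omega>\<in>space M. T \<omega> > ereal s}" by auto
    moreover have "prob ((\<lambda>x. ereal (C x)) -` {ereal s<..} \<inter> space M) = 1 - Fc s"
    proof -
      have ev: "C -` {..s} \<inter> space M \<in> events" using C_rv by measurable
      have "(\<lambda>x. ereal (C x)) -` {ereal s<..} \<inter> space M = space M - (C -` {..s} \<inter> space M)" by auto
      thus ?thesis using prob_compl[OF ev] Fc_eq by simp
    qed
    ultimately show ?thesis by simp
  qed
  have PYle: "prob (Y -` {..s} \<inter> space M) = 1 - prob (Y -` {s<..} \<inter> space M)" for s
  proof -
    have ev: "Y -` {..s} \<inter> space M \<in> events" using Y_rv by measurable
    have "Y -` {s<..} \<inter> space M = space M - (Y -` {..s} \<inter> space M)" by auto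
    thus ?thesis using prob_compl[OF ev] by simp
  qed
  have Fc_le1: "Fc x \<le> 1" for x using Fc_eq by simp
  have tauEq: "tau H = tau Fc"
  proof -
    have "H t < 1 \<longleftrightarrow> Fc t < 1" for t
    proof -
      have a: "prob {\<omega>\<in>space M. T \<omega> > ereal t} > 0" using PT[of t] p by linarith
      have "H t = 1 - prob {\<omega>\<in>space M. T \<omega> > ereal t} * (1 - Fc t)"
        using H_eq PYle PYgt by simp
      thus ?thesis using a Fc_le1[of t] by (auto simp: mult_pos_pos zero_less_mult_iff)
    qed
    thus ?thesis unfolding tau_def by simp
  qed
  have tau_nonneg: "tau Fc \<ge> 0" unfolding tau_def by (intro Sup_upper) auto
  have tau_fin: "tau Fc < \<infinity>"
  proof (rule ccontr)
    assume "\<not> tau Fc < \<infinity>"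
    hence inf: "tau Fc = \<infinity>" by simp
    have "((\<lambda>n. ereal (real n * survival Fc (tau Fc - ereal (1 / sqrt (real n))))) \<longlongrightarrow> \<infinity>) sequentially"
      using cond unfolding Fc_def by simp
    hence "((\<lambda>n. ereal 0) \<longlongrightarrow> \<infinity>) sequentially" using inf by (simp add: survival_def)
    hence "LIM n sequentially. (0::real) :> at_top" by (simp add: tendsto_PInfty_eq_at_top)
    hence "eventually (\<lambda>n. (1::real) \<le> 0) sequentially" unfolding filterlim_at_top by blast
    thus False by simp
  qed
  define r where "r = real_of_ereal (tau Fc)"
  have ninf: "\<bar>tau Fc\<bar> \<noteq> \<infinity>" using tau_fin tau_nonneg by auto
  have r: "tau Fc = ereal r" "r \<ge> 0"
    using ereal_real'[OF ninf] real_of_ereal_pos[OF tau_nonneg] unfolding r_def by simp_all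
  have Fc_r: "Fc r = 1"
  proof -
    have RD: "real_distribution (distr M borel C)"
      unfolding real_distribution_def real_distribution_axioms_def using prob_space_distr[OF C_rv] by simp
    interpret D: real_distribution "distr M borel C" by (rule RD)
    have gt: "Fc t = 1" if "t > r" for t
    proof (rule ccontr)
      assume "Fc t \<noteq> 1"
      hence "Fc t < 1" using Fc_le1[of t] by simp
      hence "ereal t \<le> tau Fc" unfolding tau_def using that r by (intro Sup_upper) auto
      thus False using r that by simp
    qed
    have "(Fc \<longlongrightarrow> Fc r) (at_right r)"
      using D.cdf_is_right_cont[of r] unfolding Fc_def continuous_within .
    moreover have "(Fc \<longlongrightarrow> 1) (at_right r)"
      by (rule tendsto_eventually, rule eventually_at_rightI[of r "r+1"]) (auto intro: gt)
    ultimately show ?thesis using tendsto_unique[OF trivial_limit_at_right_real] by blast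
  qed
  have Ys_gt_r: "prob (Ys i -` {r<..} \<inter> space M) = 0" for i
    using dist_eq[of "{r<..}" i] PYgt[of r] Fc_r by simp
  have bound: "measure M {\<omega>\<in>space M. \<bar>sqrt (real n) * (r - Max ((\<lambda>i. Ys i \<omega>) ` {0..<n}))\<bar> > \<epsilon>}
     \<le> exp (- ((1 - p) * (real n * (1 - Fc (r - \<epsilon> / sqrt (real n))))))" if "n \<ge> 1" "\<epsilon> > 0" for n \<epsilon>
  proof -
    define s where "s = r - \<epsilon> / sqrt (real n)"
    define A where "A i = Ys i -` {r<..} \<inter> space M" for i
    define B where "B i = Ys i -` {..s} \<inter> space M" for i
    have Aev: "A i \<in> events" for i unfolding A_def by (rule measurable_sets[of _ M borel]) (use Ys_rv in auto)
    have Bev: "B i \<in> events" for i unfolding B_def by (rule measurable_sets[of _ M borel]) (use Ys_rv in auto)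
    have Uev: "(\<Union>i\<in>{..<n}. A i) \<in> events" by (rule sets.finite_UN) (auto simp: Aev)
    have Iev: "(\<Inter>i\<in>{..<n}. B i) \<in> events" by (rule sets.finite_INT) (use that Bev in \<open>auto simp: lessThan_empty_iff\<close>)
    have sqn: "sqrt (real n) > 0" using that by simp
    have sub: "{\<omega>\<in>space M. \<bar>sqrt (real n) * (r - Max ((\<lambda>i. Ys i \<omega>) ` {0..<n}))\<bar> > \<epsilon>}
       \<subseteq> (\<Union>i\<in>{..<n}. A i) \<union> (\<Inter>i\<in>{..<n}. B i)"
    proof
      fix \<omega> assume w: "\<omega> \<in> {\<omega>\<in>space M. \<bar>sqrt (real n) * (r - Max ((\<lambda>i. Ys i \<omega>) ` {0..<n}))\<bar> > \<epsilon>}"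
      define m where "m = Max ((\<lambda>i. Ys i \<omega>) ` {0..<n})"
      have sp: "\<omega> \<in> space M" and gt: "\<bar>sqrt (real n) * (r - m)\<bar> > \<epsilon>" using w unfolding m_def by auto
      have fin: "finite ((\<lambda>i. Ys i \<omega>) ` {0..<n})" "(\<lambda>i. Ys i \<omega>) ` {0..<n} \<noteq> {}" using that by auto
      show "\<omega> \<in> (\<Union>i\<in>{..<n}. A i) \<union> (\<Inter>i\<in>{..<n}. B i)"
      proof (cases "r - m < 0")
        case True
        have "m \<in> (\<lambda>i. Ys i \<omega>) ` {0..<n}" unfolding m_def using fin by (rule Max_in)
        then obtain i where "i < n" "Ys i \<omega> = m" by auto
        thus ?thesis using True sp unfolding A_def by auto
      next
        case False
        have "sqrt (real n) * (r - m) \<ge> 0" using False sqn by simp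
        hence "sqrt (real n) * (r - m) > \<epsilon>" using gt by simp
        hence "r - m > \<epsilon> / sqrt (real n)" using sqn by (simp add: field_simps)
        hence ms: "m \<le> s" unfolding s_def by simp
        have "Ys i \<omega> \<le> s" if "i < n" for i
        proof -
          have "Ys i \<omega> \<le> m" unfolding m_def using fin(1) that by (intro Max_ge) auto
          thus ?thesis using ms by simp
        qed
        thus ?thesis using sp unfolding B_def by auto
      qed
    qed
    have "measure M {\<omega>\<in>space M. \<bar>sqrt (real n) * (r - Max ((\<lambda>i. Ys i \<omega>) ` {0..<n}))\<bar> > \<epsilon>}
       \<le> prob ((\<Union>i\<in>{..<n}. A i) \<union> (\<Inter>i\<in>{..<n}. B i))"
      by (rule finite_measure_mono[OF sub]) (use Uev Iev in auto)
    also have "\<dots> \<le> prob (\<Union>i\<in>{..<n}. A i) + prob (\<Inter>i\<in>{..<n}. B i)"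
      by (rule measure_Un_le) (use Uev Iev in auto)
    also have "prob (\<Union>i\<in>{..<n}. A i) = 0"
    proof -
      have "prob (\<Union>i\<in>{..<n}. A i) \<le> (\<Sum>i\<in>{..<n}. prob (A i))"
        by (rule finite_measure_subadditive_finite) (use Aev in auto)
      also have "\<dots> = 0" using Ys_gt_r unfolding A_def by simp
      finally show ?thesis using measure_nonneg[of M] by (simp add: order_antisym)
    qed
    also have "prob (\<Inter>i\<in>{..<n}. B i) = (\<Prod>i\<in>{..<n}. prob (B i))"
      unfolding B_def by (rule indep_varsD[OF Ys_indep]) (use that in \<open>auto simp: lessThan_empty_iff\<close>)
    also have "\<dots> = prob (Y -` {..s} \<inter> space M) ^ n"
      unfolding B_def using dist_eq[of "{..s}"] by simp
    also have "\<dots> \<le> exp (- ((1 - p) * (real n * (1 - Fc s))))"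
    proof -
      define x where "x = (1 - p) * (1 - Fc s)"
      have Fc0: "Fc s \<ge> 0" using Fc_eq by simp
      have x01: "0 \<le> x" "x \<le> 1" unfolding x_def using p Fc_le1[of s] Fc0
        by (auto simp: mult_le_one)
      have "prob (Y -` {..s} \<inter> space M) = 1 - prob {\<omega>\<in>space M. T \<omega> > ereal s} * (1 - Fc s)"
        using PYle PYgt by simp
      also have "\<dots> \<le> 1 - x" unfolding x_def using PT[of s] Fc_le1[of s]
        by (simp add: mult_right_mono)
      finally have "prob (Y -` {..s} \<inter> space M) ^ n \<le> (1 - x) ^ n"
        by (intro power_mono) auto
      also have "\<dots> \<le> exp (- (real n * x))" by (rule one_minus_pow_le_exp[OF x01])
      finally show ?thesis unfolding x_def by (simp add: algebra_simps)
    qed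
    finally show ?thesis unfolding s_def by simp
  qed
  have "(\<forall>\<epsilon>>0. ((\<lambda>n. measure M {\<omega>\<in>space M.
              \<bar>sqrt (real n) * (r - Max ((\<lambda>i. Ys i \<omega>) ` {0..<n}))\<bar> > \<epsilon>}) \<longlongrightarrow> 0) sequentially)"
  proof (intro allI impI)
    fix \<epsilon> :: real assume e: "\<epsilon> > 0"
    define a where "a n = 1 - Fc (r - \<epsilon> / sqrt (real n))" for n :: nat
    have "((\<lambda>n. ereal (real n * survival Fc (tau Fc - ereal (\<epsilon> / sqrt (real n))))) \<longlongrightarrow> \<infinity>) sequentially"
      using cond e unfolding Fc_def by simp
    moreover have "survival Fc (tau Fc - ereal (\<epsilon> / sqrt (real n))) = a n" for n
      unfolding a_def r(1) survival_def by simp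
    ultimately have "LIM n sequentially. real n * a n :> at_top"
      by (simp add: tendsto_PInfty_eq_at_top)
    hence "LIM n sequentially. (1 - p) * (real n * a n) :> at_top"
      by (intro filterlim_tendsto_pos_mult_at_top[OF tendsto_const]) (use p in auto)
    hence "LIM n sequentially. - ((1 - p) * (real n * a n)) :> at_bot"
      by (simp add: filterlim_uminus_at_top)
    hence lim0: "((\<lambda>n. exp (- ((1 - p) * (real n * a n)))) \<longlongrightarrow> 0) sequentially"
      by (rule filterlim_compose[OF exp_at_bot])
    show "((\<lambda>n. measure M {\<omega>\<in>space M.
              \<bar>sqrt (real n) * (r - Max ((\<lambda>i. Ys i \<omega>) ` {0..<n}))\<bar> > \<epsilon>}) \<longlongrightarrow> 0) sequentially"
    proof (rule tendsto_sandwich[OF _ _ tendsto_const lim0])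
      show "\<forall>\<^sub>F n in sequentially. 0 \<le> measure M {\<omega>\<in>space M.
              \<bar>sqrt (real n) * (r - Max ((\<lambda>i. Ys i \<omega>) ` {0..<n}))\<bar> > \<epsilon>}" by simp
      show "\<forall>\<^sub>F n in sequentially. measure M {\<omega>\<in>space M.
              \<bar>sqrt (real n) * (r - Max ((\<lambda>i. Ys i \<omega>) ` {0..<n}))\<bar> > \<epsilon>}
             \<le> exp (- ((1 - p) * (real n * a n)))"
        using bound e unfolding a_def eventually_sequentially by (intro exI[of _ 1]) auto
    qed
  qed
  thus ?thesis using tauEq tau_fin r unfolding H_def Fc_def Y_def by simp
qed

end
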